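(* Let $f=\frac1n\sum_{z=1}^nf_z$ where each $\nabla f_z$ is $L$-Lipschitz and $\|\nabla f_z(x)\|\le l$ for all $x$ and $z$. In an SCSG inner loop (see context) with $b\ge1$, $n\ge8b$ and $\eta L=\gamma(b/n)^{2/3}$, $\gamma\le\frac13$, each iteration satisfies $$\mathbb{E}[f(x_t)-f(x_{t-1})]\le\frac{5l^2\gamma^2}{L}\left(\frac bn\right)^{4/3}.$$
   Context: SCSG inner loop with snapshot $\tilde x$: $\tilde\mu=\nabla f(\tilde x)$, $x_0=\tilde x$, and $x_t=x_{t-1}-\eta(\nabla f_{I_t}(x_{t-1})-\nabla f_{I_t}(\tilde x)+\tilde\mu)$, where $I_t\subset[n]$ is a uniformly random subset of size $b$ and $\nabla f_I=\frac1{|I|}\sum_{i\in I}\nabla f_i$. *)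

theory Defs
  imports "HOL-Analysis.Analysis" "HOL-Probability.Probability"
begin

definition batch_grad :: "(nat \<Rightarrow> 'a \<Rightarrow> 'a::real_vector) \<Rightarrow> nat set \<Rightarrow> 'a \<Rightarrow> 'a" where
  "batch_grad g I x = (1 / real (card I)) *\<^sub>R (\<Sum>i\<in>I. g i x)"

definition batches :: "nat \<Rightarrow> nat \<Rightarrow> nat set set" where
  "batches n b = {I. I \<subseteq> {1..n} \<and> card I = b}"

text \<open>SCSG inner loop: starting from the snapshot xt, apply the steps given by the
  list of batches Is = [I_1, ..., I_k]; the result is x_k.  mu is the snapshot gradient.\<close>
definition scsg_iter :: "(nat \<Rightarrow> 'a \<Rightarrow> 'a::real_vector) \<Rightarrow> real \<Rightarrow> 'a \<Rightarrow> 'a \<Rightarrow> nat set list \<Rightarrow> 'a" where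
  "scsg_iter g \<eta> mu xt Is =
     foldl (\<lambda>x I. x - \<eta> *\<^sub>R (batch_grad g I x - batch_grad g I xt + mu)) xt Is"

end

theory Submission
  imports Defs
begin

lemma descent:
  fixes F :: "'a::real_inner \<Rightarrow> real" and G :: "'a \<Rightarrow> 'a"
  assumes der: "\<And>x. (F has_derivative (\<lambda>h. inner h (G x))) (at x)"
   and lipG: "\<And>x y. norm (G x - G y) \<le> L * norm (x-y)"
  shows "F y \<le> F x + inner (G x) (y - x) + L/2 * norm (y-x)^2"
proof -
  define d where "d = y - x"
  define \<phi> where "\<phi> s = F (x + s *\<^sub>R d) - s * inner (G x) d - L/2 * s^2 * norm d^2" for s
  have D: "DERIV \<phi> s :> inner d (G (x + s *\<^sub>R d)) - inner (G x) d - L * s * norm d^2" for s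
  proof -
    have l: "((\<lambda>s. x + s *\<^sub>R d) has_derivative (\<lambda>h. h *\<^sub>R d)) (at s)"
      by (auto intro!: derivative_eq_intros)
    have "((\<lambda>s. F (x + s *\<^sub>R d)) has_derivative (\<lambda>h. inner (h *\<^sub>R d) (G (x + s *\<^sub>R d)))) (at s)"
      using has_derivative_compose[OF l der] by simp
    then have "DERIV (\<lambda>s. F (x + s *\<^sub>R d)) s :> inner d (G (x + s *\<^sub>R d))"
      by (simp add: has_field_derivative_def mult_commute_abs)
    then show ?thesis unfolding \<phi>_def
      by (auto intro!: derivative_eq_intros)
  qed
  have "\<phi> 0 \<ge> \<phi> 1"
  proof (rule DERIV_nonpos_imp_nonincreasing[of 0 1 \<phi>])
    show "(0::real) \<le> 1" by simp
  next
    fix s :: real assume s: "0 \<le> s" "s \<le> 1"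
    have "inner d (G (x + s *\<^sub>R d) - G x) \<le> norm d * norm (G (x + s *\<^sub>R d) - G x)"
      by (rule norm_cauchy_schwarz)
    also have "\<dots> \<le> norm d * (L * norm (s *\<^sub>R d))"
      using lipG[of "x + s *\<^sub>R d" x] by (simp add: mult_left_mono)
    also have "\<dots> = L * s * norm d^2" using s by (simp add: power2_eq_square)
    finally have "inner d (G (x + s *\<^sub>R d)) - inner (G x) d - L * s * norm d^2 \<le> 0"
      by (simp add: inner_diff_right inner_commute)
    then show "\<exists>y. DERIV \<phi> s :> y \<and> y \<le> 0" using D by blast
  qed
  then show ?thesis unfolding \<phi>_def d_def by simp
qed

lemma finite_batches: "finite (batches n b)"
  unfolding batches_def by (rule finite_subset[of _ "Pow {1..n}"]) auto

lemma card_batches: "card (batches n b) = n choose b"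
  unfolding batches_def using n_subsets[of "{1..n}" b] by simp

lemma card_batches_mem:
  assumes i: "i \<in> {1..n}" and b: "1 \<le> b"
  shows "card {I \<in> batches n b. i \<in> I} = (n - 1) choose (b - 1)"
proof -
  have "{I \<in> batches n b. i \<in> I} = insert i ` {J. J \<subseteq> {1..n} - {i} \<and> card J = b - 1}"
  proof (rule set_eqI, rule iffI)
    fix I assume I: "I \<in> {I \<in> batches n b. i \<in> I}"
    then have fin: "finite I" unfolding batches_def using finite_subset by blast
    have "I = insert i (I - {i})" using I by auto
    moreover have "I - {i} \<in> {J. J \<subseteq> {1..n} - {i} \<and> card J = b - 1}"
      using I fin by (auto simp: batches_def)
    ultimately show "I \<in> insert i ` {J. J \<subseteq> {1..n} - {i} \<and> card J = b - 1}" by blast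
  next
    fix I assume "I \<in> insert i ` {J. J \<subseteq> {1..n} - {i} \<and> card J = b - 1}"
    then obtain J where J: "J \<subseteq> {1..n} - {i}" "card J = b - 1" "I = insert i J" by blast
    have "finite J" using J(1) finite_subset by blast
    then show "I \<in> {I \<in> batches n b. i \<in> I}" using J i b
      by (auto simp: batches_def card_insert_if)
  qed
  moreover have "inj_on (insert i) {J. J \<subseteq> {1..n} - {i} \<and> card J = b - 1}"
    by (rule inj_onI) blast
  ultimately have "card {I \<in> batches n b. i \<in> I} = card {J. J \<subseteq> {1..n} - {i} \<and> card J = b - 1}"
    by (simp add: card_image)
  also have "\<dots> = card ({1..n} - {i}) choose (b - 1)" by (rule n_subsets) simp
  also have "card ({1..n} - {i}) = n - 1" using i by simp
  finally show ?thesis .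
qed

lemma batch_sum:
  fixes g :: "nat \<Rightarrow> 'a \<Rightarrow> 'a::real_vector"
  assumes b: "1 \<le> b"
  shows "(\<Sum>I\<in>batches n b. batch_grad g I y) = real (card (batches n b)) *\<^sub>R ((1/real n) *\<^sub>R (\<Sum>z=1..n. g z y))"
proof -
  have "(\<Sum>I\<in>batches n b. batch_grad g I y) = (\<Sum>I\<in>batches n b. (1/real b) *\<^sub>R (\<Sum>i\<in>{i\<in>{1..n}. i \<in> I}. g i y))"
  proof (rule sum.cong)
    fix I assume "I \<in> batches n b"
    then have "card I = b" "{i\<in>{1..n}. i \<in> I} = I" by (auto simp: batches_def)
    then show "batch_grad g I y = (1/real b) *\<^sub>R (\<Sum>i\<in>{i\<in>{1..n}. i \<in> I}. g i y)"
      by (simp add: batch_grad_def)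
  qed simp
  also have "\<dots> = (1/real b) *\<^sub>R (\<Sum>I\<in>batches n b. \<Sum>i\<in>{i\<in>{1..n}. i \<in> I}. g i y)"
    by (simp add: scaleR_sum_right)
  also have "(\<Sum>I\<in>batches n b. \<Sum>i\<in>{i\<in>{1..n}. i \<in> I}. g i y) = (\<Sum>i\<in>{1..n}. \<Sum>I\<in>{I\<in>batches n b. i \<in> I}. g i y)"
    by (rule sum.swap_restrict) (auto simp: finite_batches)
  also have "\<dots> = (\<Sum>i\<in>{1..n}. real ((n - 1) choose (b - 1)) *\<^sub>R g i y)"
  proof (rule sum.cong)
    fix i assume i: "i \<in> {1..n}"
    show "(\<Sum>I\<in>{I\<in>batches n b. i \<in> I}. g i y) = real ((n - 1) choose (b - 1)) *\<^sub>R g i y"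
      using card_batches_mem[OF i b] by (metis sum_constant_scaleR)
  qed simp
  also have "(1/real b) *\<^sub>R \<dots> = real (card (batches n b)) *\<^sub>R ((1/real n) *\<^sub>R (\<Sum>z=1..n. g z y))"
  proof (cases "n = 0")
    case True then show ?thesis by simp
  next
    case False
    have e: "real b * real (n choose b) = real n * real ((n - 1) choose (b - 1))"
      using times_binomial_minus1_eq[of b n] b by (metis of_nat_mult less_le_trans zero_less_one)
    have "(1/real b) * real ((n - 1) choose (b - 1)) = real (n choose b) * (1 / real n)"
      using e b False by (simp add: field_simps)
    then show ?thesis
      by (simp add: card_batches scaleR_sum_right[symmetric] scaleR_scaleR)
  qed
  finally show ?thesis .
qed

lemma norm_batch_grad:
  fixes g :: "nat \<Rightarrow> 'a \<Rightarrow> 'a::real_normed_vector"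
  assumes bnd: "\<And>z x. z \<in> {1..n} \<Longrightarrow> norm (g z x) \<le> l"
    and I: "I \<subseteq> {1..n}" "card I \<noteq> 0"
  shows "norm (batch_grad g I x) \<le> l"
proof -
  have "norm (\<Sum>i\<in>I. g i x) \<le> (\<Sum>i\<in>I. l)"
    by (rule sum_norm_le) (use bnd I in auto)
  then have "norm (\<Sum>i\<in>I. g i x) \<le> real (card I) * l" by simp
  then show ?thesis using I unfolding batch_grad_def
    by (simp add: field_simps)
qed

lemma per_y:
  fixes F :: "'a::real_inner \<Rightarrow> real" and G :: "'a \<Rightarrow> 'a" and g :: "nat \<Rightarrow> 'a \<Rightarrow> 'a"
  assumes der: "\<And>x. (F has_derivative (\<lambda>h. inner h (G x))) (at x)"
   and lipG: "\<And>x y. norm (G x - G y) \<le> L * norm (x-y)"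
   and Gdef: "\<And>x. G x = (1/real n) *\<^sub>R (\<Sum>z=1..n. g z x)"
   and bnd: "\<And>z x. z \<in> {1..n} \<Longrightarrow> norm (g z x) \<le> l"
   and b: "1 \<le> b" and eta: "\<eta> \<ge> 0" and L: "L \<ge> 0"
  shows "(\<Sum>I\<in>batches n b. F (y - \<eta> *\<^sub>R (batch_grad g I y - batch_grad g I xt + G xt)) - F y)
     \<le> real (card (batches n b)) * (9/2 * L * \<eta>^2 * l^2)"
proof -
  define v where "v I = batch_grad g I y - batch_grad g I xt + G xt" for I
  have nv: "norm (v I) \<le> 3 * l" if I: "I \<in> batches n b" for I
  proof -
    have "I \<subseteq> {1..n}" "card I \<noteq> 0" using I b by (auto simp: batches_def)
    then have "norm (batch_grad g I y) \<le> l" "norm (batch_grad g I xt) \<le> l"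
      using norm_batch_grad[where n=n and g=g and l=l, OF bnd] by blast+
    moreover have "n > 0"
    proof -
      obtain i where "i \<in> I" using \<open>card I \<noteq> 0\<close> by (metis card.empty ex_in_conv)
      then show ?thesis using \<open>I \<subseteq> {1..n}\<close> by auto
    qed
    moreover have "G xt = batch_grad g {1..n} xt" "card {1..n} \<noteq> 0" using \<open>n > 0\<close>
      by (auto simp: Gdef batch_grad_def)
    then have "norm (G xt) \<le> l" using norm_batch_grad[where n=n and g=g and l=l and I="{1..n}", OF bnd] by auto
    ultimately show ?thesis unfolding v_def
      by (smt (verit) norm_triangle_ineq norm_triangle_ineq4)
  qed
  have trm: "F (y - \<eta> *\<^sub>R v I) - F y \<le> - \<eta> * inner (G y) (v I) + 9/2 * L * \<eta>^2 * l^2"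
    if I: "I \<in> batches n b" for I
  proof -
    have "F (y - \<eta> *\<^sub>R v I) \<le> F y + inner (G y) (y - \<eta> *\<^sub>R v I - y) + L/2 * norm (y - \<eta> *\<^sub>R v I - y)^2"
      by (rule descent[OF der lipG])
    also have "\<dots> = F y - \<eta> * inner (G y) (v I) + L/2 * \<eta>^2 * norm (v I)^2"
      using eta by (simp add: power_mult_distrib)
    finally have A: "F (y - \<eta> *\<^sub>R v I) \<le> F y - \<eta> * inner (G y) (v I) + L/2 * \<eta>^2 * norm (v I)^2" .
    have "norm (v I)^2 \<le> (3*l)^2"
      using nv[OF I] by (meson norm_ge_zero power_mono)
    then have B: "L/2 * \<eta>^2 * norm (v I)^2 \<le> L/2 * \<eta>^2 * (3*l)^2"
      by (rule mult_left_mono) (use L in simp)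
    have "L/2 * \<eta>^2 * (3*l)^2 = 9/2 * L * \<eta>^2 * l^2" by (simp add: power_mult_distrib)
    then show ?thesis using A B by linarith
  qed
  have sv: "(\<Sum>I\<in>batches n b. v I) = real (card (batches n b)) *\<^sub>R G y"
    unfolding v_def sum.distrib sum_subtractf batch_sum[OF b] Gdef by (simp add: sum_constant_scaleR)
  have "(\<Sum>I\<in>batches n b. F (y - \<eta> *\<^sub>R v I) - F y) \<le> (\<Sum>I\<in>batches n b. - \<eta> * inner (G y) (v I) + 9/2 * L * \<eta>^2 * l^2)"
    by (rule sum_mono) (rule trm)
  also have "\<dots> = - \<eta> * inner (G y) (\<Sum>I\<in>batches n b. v I) + real (card (batches n b)) * (9/2 * L * \<eta>^2 * l^2)"
    unfolding sum.distrib sum_constant inner_sum_right sum_distrib_left mult_minus_left sum_negf by simp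
  also have "\<dots> \<le> real (card (batches n b)) * (9/2 * L * \<eta>^2 * l^2)"
    using eta by (simp add: sv mult_nonneg_nonneg)
  finally show ?thesis unfolding v_def .
qed

theorem lemma23:
  fixes fz :: "nat \<Rightarrow> 'a::euclidean_space \<Rightarrow> real"
    and g :: "nat \<Rightarrow> 'a \<Rightarrow> 'a"
    and n b t :: nat and L l \<eta> \<gamma> :: real and xt :: 'a
  assumes grad: "\<And>z x. z \<in> {1..n} \<Longrightarrow> GDERIV (fz z) x :> g z x"
    and lip: "\<And>z x y. z \<in> {1..n} \<Longrightarrow> norm (g z x - g z y) \<le> L * norm (x - y)"
    and bnd: "\<And>z x. z \<in> {1..n} \<Longrightarrow> norm (g z x) \<le> l"
    and L_pos: "L > 0"
    and b: "b \<ge> 1" and nb: "real n \<ge> 8 * real b"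
    and step: "\<eta> * L = \<gamma> * (real b / real n) powr (2/3)"
    and gamma_pos: "\<gamma> > 0" and gamma_le: "\<gamma> \<le> 1/3"
    and t: "t \<ge> 1"
  shows
    "(let f = (\<lambda>x. (1 / real n) * (\<Sum>z=1..n. fz z x));
          mu = (1 / real n) *\<^sub>R (\<Sum>z=1..n. g z xt);
          X = scsg_iter g \<eta> mu xt
      in measure_pmf.expectation
           (pmf_of_set {Is. length Is = t \<and> set Is \<subseteq> batches n b})
           (\<lambda>Is. f (X Is) - f (X (butlast Is))))
     \<le> 5 * l^2 * \<gamma>^2 / L * (real b / real n) powr (4/3)"
proof -
  define f where "f = (\<lambda>x. (1 / real n) * (\<Sum>z=1..n. fz z x))"
  define G where "G = (\<lambda>x. (1 / real n) *\<^sub>R (\<Sum>z=1..n. g z x))"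
  define X where "X = scsg_iter g \<eta> (G xt) xt"
  define B where "B = batches n b"
  define C where "C = 9/2 * L * \<eta>^2 * l^2"
  have npos: "n > 0" using nb b by simp
  have der: "(f has_derivative (\<lambda>h. inner h (G x))) (at x)" for x
  proof -
    have "(f has_derivative (\<lambda>h. (1 / real n) * (\<Sum>z=1..n. inner h (g z x)))) (at x)"
      unfolding f_def
      by (intro has_derivative_mult_right has_derivative_sum) (use grad in \<open>auto simp: gderiv_def\<close>)
    moreover have "(\<lambda>h. (1 / real n) * (\<Sum>z=1..n. inner h (g z x))) = (\<lambda>h. inner h (G x))"
      by (simp add: G_def inner_sum_right)
    ultimately show ?thesis by simp
  qed
  have lipG: "norm (G x - G y) \<le> L * norm (x - y)" for x y
  proof -
    have "G x - G y = (1 / real n) *\<^sub>R (\<Sum>z=1..n. g z x - g z y)"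
      by (simp add: G_def sum_subtractf scaleR_diff_right)
    then have "norm (G x - G y) = (1 / real n) * norm (\<Sum>z=1..n. g z x - g z y)" by simp
    also have "norm (\<Sum>z=1..n. g z x - g z y) \<le> (\<Sum>z=1..n. L * norm (x - y))"
      by (rule sum_norm_le) (use lip in auto)
    finally show ?thesis using npos by (simp add: divide_simps)
  qed
  have eta: "\<eta> \<ge> 0"
  proof -
    have "\<eta> * L > 0" unfolding step using gamma_pos npos b by simp
    then show ?thesis using L_pos by (simp add: zero_less_mult_iff)
  qed
  have py: "(\<Sum>I\<in>B. f (y - \<eta> *\<^sub>R (batch_grad g I y - batch_grad g I xt + G xt)) - f y)
     \<le> real (card B) * C" for y
    unfolding B_def C_def
    by (rule per_y[OF der lipG _ bnd b eta]) (use L_pos in \<open>auto simp: G_def\<close>)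
  obtain k where k: "t = Suc k" using t by (cases t) auto
  define P where "P = {p. set p \<subseteq> B \<and> length p = k}"
  define S where "S = {Is. length Is = t \<and> set Is \<subseteq> B}"
  have finB: "finite B" unfolding B_def by (rule finite_batches)
  have cardB: "card B > 0"
    unfolding B_def card_batches using nb b by simp
  have finP: "finite P" unfolding P_def using finB by (rule finite_lists_length_eq)
  have cardP: "card P = card B ^ k" unfolding P_def using finB by (rule card_lists_length_eq)
  have Sim: "S = (\<lambda>(p, I). p @ [I]) ` (P \<times> B)"
  proof (rule set_eqI, rule iffI)
    fix Is assume "Is \<in> S"
    then have "length Is = Suc k" "set Is \<subseteq> B" unfolding S_def k by auto
    moreover then have ne: "Is \<noteq> []" by auto
    ultimately have "Is = butlast Is @ [last Is]" "butlast Is \<in> P" "last Is \<in> B"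
      unfolding P_def
      by (auto dest: in_set_butlastD)
    then show "Is \<in> (\<lambda>(p, I). p @ [I]) ` (P \<times> B)" by force
  qed (auto simp: S_def P_def k)
  have inj: "inj_on (\<lambda>(p, I). p @ [I]) (P \<times> B)"
    by (rule inj_onI) auto
  have cardS: "card S = card P * card B"
    unfolding Sim by (simp add: card_image[OF inj] card_cartesian_product)
  have cardS0: "card S > 0" using cardS cardP cardB by simp
  have Sne: "S \<noteq> {}" "finite S" using cardS0 card_gt_0_iff by blast+
  define H where "H = (\<lambda>Is. f (X Is) - f (X (butlast Is)))"
  have "sum H S = (\<Sum>(p, I)\<in>P \<times> B. H (p @ [I]))"
    unfolding Sim by (subst sum.reindex[OF inj]) (simp add: case_prod_unfold)
  also have "\<dots> = (\<Sum>p\<in>P. \<Sum>I\<in>B. H (p @ [I]))"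
    by (rule sum.cartesian_product[symmetric])
  also have "\<dots> \<le> (\<Sum>p\<in>P. real (card B) * C)"
  proof (rule sum_mono)
    fix p
    have "(\<Sum>I\<in>B. H (p @ [I])) = (\<Sum>I\<in>B. f (X p - \<eta> *\<^sub>R (batch_grad g I (X p) - batch_grad g I xt + G xt)) - f (X p))"
      unfolding H_def X_def scsg_iter_def by simp
    also have "\<dots> \<le> real (card B) * C" by (rule py)
    finally show "(\<Sum>I\<in>B. H (p @ [I])) \<le> real (card B) * C" .
  qed
  also have "\<dots> = real (card S) * C" by (simp add: cardS)
  finally have sH: "sum H S \<le> real (card S) * C" .
  have E: "measure_pmf.expectation (pmf_of_set S) H = sum H S / card S"
    by (rule integral_pmf_of_set[OF Sne])
  have "measure_pmf.expectation (pmf_of_set S) H \<le> C"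
    unfolding E using sH cardS0 by (simp add: pos_divide_le_eq mult.commute)
  also have "C \<le> 5 * l^2 * \<gamma>^2 / L * (real b / real n) powr (4/3)"
  proof -
    have r: "((real b / real n) powr (2/3))^2 = (real b / real n) powr (4/3)"
      by (simp add: powr_powr[symmetric] powr_realpow[symmetric] power2_eq_square powr_add[symmetric])
    have q: "(\<eta> * L)^2 / L = \<eta>^2 * L" using L_pos by (simp add: power2_eq_square)
    have "C = 9/2 * l^2 * ((\<eta> * L)^2 / L)" unfolding C_def q by simp
    also have "\<dots> = 9/2 * l^2 * (\<eta> * L)^2 / L" by simp
    also have "\<dots> = 9/2 * l^2 * \<gamma>^2 / L * (real b / real n) powr (4/3)"
      unfolding step power_mult_distrib r by simp
    also have "\<dots> \<le> 5 * l^2 * \<gamma>^2 / L * (real b / real n) powr (4/3)"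
      using L_pos by (intro mult_right_mono divide_right_mono mult_right_mono) auto
    finally show ?thesis .
  qed
  finally have fin: "measure_pmf.expectation (pmf_of_set S) H \<le> 5 * l^2 * \<gamma>^2 / L * (real b / real n) powr (4/3)" .
  show ?thesis
    using fin unfolding Let_def H_def X_def G_def S_def B_def f_def .
qed

end
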